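(* Let $n\ge 0$ and put $\mathbb{C}[\epsilon]=\mathbb{C}[z]/(z^{n+1})$. Let $K=\mathbb{C}(s,x,t_0,u_{i,j}:0\le j\le i)$ with the derivation $\partial$ described in the context, and write $u_i=u_{i,i}$. Then in $K[\epsilon]=K\otimes\mathbb{C}[\epsilon]$: (a) $t_0-x+\epsilon=\Big(\sum_{k=0}^{n}\frac{1}{k!}\partial^k\big(\frac{t_0-x}{s-u_0}\big)\epsilon^k\Big)\Big(s-\sum_{k=0}^{n}u_k\epsilon^k\Big)$; (b) for every $0\le m\le n$, $\frac{1}{m!}\partial^m\big(\log(s-u_0)\big)=[\epsilon^m]\log\big(s-\sum_{k=0}^n u_k\epsilon^k\big)$.
   Context: $K$ is the field of rational functions over $\mathbb{C}$ in the independent variables $s,x,t_0$ and $u_{i,j}$ for integers $0\le j\le i$. The derivation $\partial:K\to K$ is the unique $\mathbb{C}$-linear derivation with $\partial s=\partial x=0$, $\partial t_0=1$ and $\partial u_{i,j}=(j+1)u_{i+1,j+1}$; one writes $u_i:=u_{i,i}$ (so $\partial u_i=(i+1)u_{i+1}$). In (b), for $m\ge1$, $\partial^m\log(s-u_0)$ means $\partial^{m-1}\big(\frac{-u_1}{s-u_0}\big)$ (the formal derivative of $\log(s-u_0)$ is $-\partial u_0/(s-u_0)$), and for $m\ge 1$, $[\epsilon^m]\log(s-\sum_k u_k\epsilon^k)$ denotes the coefficient of $\epsilon^m$ in the (finite, since $\epsilon$ is nilpotent) expansion of $\log\big(1-\sum_{k=1}^n\frac{u_k}{s-u_0}\epsilon^k\big)=-\sum_{r\ge1}\frac1r\big(\sum_{k=1}^n\frac{u_k}{s-u_0}\epsilon^k\big)^r$;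 for $m=0$ both sides are $\log(s-u_0)$. *)

theory Defs
  imports "HOL-Computational_Algebra.Polynomial"
begin

definition is_derivation :: "('a::field \<Rightarrow> 'a) \<Rightarrow> bool" where
  "is_derivation D \<longleftrightarrow> (\<forall>a b. D (a + b) = D a + D b) \<and> (\<forall>a b. D (a * b) = D a * b + a * D b)"

text \<open>Elements of K[eps] = K[z]/(z^(n+1)) are represented by polynomials in z;
  equality in K[eps] is congruence modulo z^(n+1).\<close>
definition eq_trunc :: "nat \<Rightarrow> 'a::field poly \<Rightarrow> 'a poly \<Rightarrow> bool" where
  "eq_trunc n P Q \<longleftrightarrow> [:0, 1:] ^ Suc n dvd (P - Q)"

text \<open>For m >= 1, the coefficient of eps^m in
  log(1 - sum_{k=1..n} u_k/(s-u_0) eps^k) = - sum_{r>=1} (1/r) (sum_{k=1..n} u_k/(s-u_0) eps^k)^r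
  (the sum over r is finite since eps^(n+1) = 0; terms with r > n vanish).\<close>
definition log_coeff :: "nat \<Rightarrow> 'a::field_char_0 \<Rightarrow> (nat \<Rightarrow> 'a) \<Rightarrow> nat \<Rightarrow> 'a" where
  "log_coeff n s u m =
     (let w = (\<Sum>k=1..n. monom (u k / (s - u 0)) k)
      in - (\<Sum>r=1..n. coeff (w ^ r) m / of_nat r))"

end

theory Submission
  imports Defs "HOL-Computational_Algebra.Polynomial_FPS"
begin

unbundle fps_syntax

definition TT :: "('a::field_char_0 \<Rightarrow> 'a) \<Rightarrow> 'a \<Rightarrow> 'a fps" where
  "TT D a = Abs_fps (\<lambda>k. (D ^^ k) a / fact k)"

lemma TT_nth: "TT D a $ k = (D ^^ k) a / fact k" by (simp add: TT_def)

lemma coeff_monom_sum: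
  "coeff (\<Sum>k\<in>A. monom (c k) k) i = (if i \<in> A then c i else 0)" if "finite A"
  using that by (simp add: coeff_sum)

lemma pow_agree:
  fixes A B :: "'a::comm_ring_1 fps"
  assumes "\<And>i. i \<le> n \<Longrightarrow> A $ i = B $ i"
  shows "i \<le> n \<Longrightarrow> (A ^ r) $ i = (B ^ r) $ i"
proof (induction r arbitrary: i)
  case 0 then show ?case by simp
next
  case (Suc r)
  show ?case unfolding power_Suc fps_mult_nth
    by (rule sum.cong) (use Suc assms in auto)
qed

lemma pow_low:
  fixes W :: "'a::comm_ring_1 fps"
  assumes "W $ 0 = 0"
  shows "m < r \<Longrightarrow> (W ^ r) $ m = 0"
proof (induction r arbitrary: m)
  case 0 then show ?case by simp
next
  case (Suc r)
  have "W $ i * (W ^ r) $ (m - i) = 0" if "i \<in> {0..m}" for i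
    using Suc assms that by (cases i) auto
  then show ?case unfolding power_Suc fps_mult_nth by simp
qed

context
  fixes D :: "'a::field_char_0 \<Rightarrow> 'a"
  assumes der: "is_derivation D"
begin


lemma dadd: "D (a + b) = D a + D b" using der by (simp add: is_derivation_def)
lemma dmult: "D (a * b) = D a * b + a * D b" using der by (simp add: is_derivation_def)
lemma d0: "D 0 = 0" using dadd[of 0 0] by simp
lemma d1: "D 1 = 0" using dmult[of 1 1] by simp
lemma dneg: "D (- a) = - D a" using dadd[of a "-a"] d0 by (metis add.right_inverse add_eq_0_iff)
lemma ddiff: "D (a - b) = D a - D b" using dadd[of a "-b"] dneg[of b] by simp
lemma dofnat: "D (of_nat k) = 0" by (induction k) (simp_all add: d0 dadd d1)
lemma dconst_mult: "D (of_nat c * a) = of_nat c * D a" by (simp add: dmult dofnat)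

lemma itadd: "(D ^^ k) (a + b) = (D ^^ k) a + (D ^^ k) b" by (induction k) (simp_all add: dadd)
lemma itdiff: "(D ^^ k) (a - b) = (D ^^ k) a - (D ^^ k) b" by (induction k) (simp_all add: ddiff)
lemma itconst: "D c = 0 \<Longrightarrow> (D ^^ k) c = (if k = 0 then c else 0)"
  by (induction k) (auto simp: d0)

lemma TT_add: "TT D (a + b) = TT D a + TT D b"
  by (simp add: fps_eq_iff TT_nth itadd add_divide_distrib)

lemma TT_deriv: "fps_deriv (TT D a) = TT D (D a)"
proof -
  have "of_nat (Suc n) * ((D ^^ Suc n) a / fact (Suc n)) = (D ^^ n) (D a) / (fact n :: 'a)" for n
  proof -
    have c: "(of_nat (Suc n)::'a) \<noteq> 0" by (rule of_nat_neq_0)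
    have "(D ^^ Suc n) a = (D ^^ n) (D a)" by (simp add: funpow_Suc_right del: funpow.simps)
    then show ?thesis using c by (simp add: field_simps del: of_nat_Suc)
  qed
  then show ?thesis by (simp add: fps_eq_iff TT_nth del: of_nat_Suc)
qed

lemma TT_mult: "TT D (a * b) = TT D a * TT D b"
proof -
  have "\<forall>a b. TT D (a*b) $ n = (TT D a * TT D b) $ n" for n
  proof (induction n)
    case 0 show ?case by (simp add: TT_nth fps_mult_nth)
  next
    case (Suc n)
    show ?case
    proof (intro allI)
      fix a b
      have "of_nat (Suc n) * TT D (a*b) $ Suc n = fps_deriv (TT D (a*b)) $ n" by simp
      also have "\<dots> = TT D (D a * b) $ n + TT D (a * D b) $ n" by (simp add: TT_deriv dmult TT_add)
      also have "\<dots> = (TT D (D a) * TT D b) $ n + (TT D a * TT D (D b)) $ n" using Suc.IH by simp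
      also have "\<dots> = fps_deriv (TT D a * TT D b) $ n" by (simp add: TT_deriv algebra_simps)
      also have "\<dots> = of_nat (Suc n) * (TT D a * TT D b) $ Suc n" by (simp only: fps_deriv_nth Suc_eq_plus1)
      finally show "TT D (a*b) $ Suc n = (TT D a * TT D b) $ Suc n"
        by (metis of_nat_eq_0_iff mult_cancel_left nat.distinct(1))
    qed
  qed
  then show ?thesis by (simp add: fps_eq_iff)
qed

end


lemma fpsln_comp:
  fixes b :: "'a::field_char_0 fps"
  assumes b0: "b $ 0 = 0"
  shows "(1 + b) * fps_deriv (fps_ln 1 oo b) = fps_deriv b"
proof -
  have inv: "(1 + fps_X) * inverse (1 + fps_X :: 'a fps) = 1"
    by (rule inverse_mult_eq_1') simp
  have "(1 + b) * (inverse (1 + fps_X) oo b) = ((1 + fps_X) oo b) * (inverse (1 + fps_X) oo b)"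
    using b0 by (simp add: fps_compose_add_distrib)
  also have "\<dots> = ((1 + fps_X) * inverse (1 + fps_X)) oo b"
    using b0 by (simp add: fps_compose_mult_distrib)
  also have "\<dots> = 1" by (simp add: inv)
  finally have 1: "(1 + b) * (inverse (1 + fps_X) oo b) = 1" .
  have "fps_deriv (fps_ln 1 oo b) = (inverse (1 + fps_X) oo b) * fps_deriv b"
    using b0 by (simp add: fps_compose_deriv fps_ln_deriv)
  then show ?thesis using 1 by (metis mult.assoc mult_1)
qed

lemma neg_pow_nth: "((- W) ^ i) $ m = (-1) ^ i * ((W :: 'a::comm_ring_1 fps) ^ i $ m)"
proof (induction i arbitrary: m)
  case 0 then show ?case by simp
next
  case (Suc i)
  have "((- W) ^ Suc i) $ m = (\<Sum>j=0..m. - (W $ j) * ((-1) ^ i * (W ^ i $ (m - j))))"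
    unfolding power_Suc fps_mult_nth using Suc by simp
  also have "\<dots> = (-1) ^ Suc i * (\<Sum>j=0..m. W $ j * (W ^ i $ (m - j)))"
    by (simp add: sum_distrib_left mult.left_commute)
  finally show ?case unfolding power_Suc[of W] fps_mult_nth .
qed

theorem proposition2p2:
  fixes D :: "'a::field_char_0 \<Rightarrow> 'a"
    and s x t0 :: 'a
    and u :: "nat \<Rightarrow> nat \<Rightarrow> 'a"
    and n :: nat
  assumes der: "is_derivation D"
    and Ds: "D s = 0" and Dx: "D x = 0" and Dt0: "D t0 = 1"
    and Du: "\<And>i j. j \<le> i \<Longrightarrow> D (u i j) = of_nat (j + 1) * u (i + 1) (j + 1)"
    and nz: "s - u 0 0 \<noteq> 0"
  shows "eq_trunc n [: t0 - x, 1 :]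
           ((\<Sum>k=0..n. monom ((D ^^ k) ((t0 - x) / (s - u 0 0)) / fact k) k)
            * ([: s :] - (\<Sum>k=0..n. monom (u k k) k)))
         \<and> (\<forall>m. 1 \<le> m \<and> m \<le> n \<longrightarrow>
           (D ^^ (m - 1)) (- u 1 1 / (s - u 0 0)) / fact m = log_coeff n s (\<lambda>k. u k k) m)"
proof -
  define a where "a = s - u 0 0"
  have diag: "(D ^^ k) (u 0 0) = fact k * u k k" for k
  proof (induction k)
    case 0 then show ?case by simp
  next
    case (Suc k)
    have "(D ^^ Suc k) (u 0 0) = D (of_nat (fact k) * u k k)" using Suc by (simp add: of_nat_fact)
    also have "\<dots> = of_nat (fact k) * (of_nat (Suc k) * u (Suc k) (Suc k))"
      using dconst_mult[OF der, of "fact k" "u k k"] Du[of k k] by simp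
    also have "\<dots> = fact (Suc k) * u (Suc k) (Suc k)" by (simp add: of_nat_fact)
    finally show ?case .
  qed
  have Ta: "TT D a $ k = (if k = 0 then a else - u k k)" for k
    by (simp add: TT_nth a_def itdiff[OF der] itconst[OF der Ds] diag)
  have Tt: "TT D (t0 - x) $ k = (if k = 0 then t0 - x else if k = 1 then 1 else 0)" for k
  proof (cases k)
    case 0 then show ?thesis by (simp add: TT_nth)
  next
    case (Suc j)
    have "D (t0 - x) = 1" by (simp add: ddiff[OF der] Dt0 Dx)
    then have "(D ^^ k) (t0 - x) = (D ^^ j) 1" using Suc by (simp add: funpow_Suc_right del: funpow.simps)
    then show ?thesis using Suc itconst[OF der d1[OF der], of j] by (simp add: TT_nth)
  qed
  define f where "f = (t0 - x) / a"
  have fa: "TT D f * TT D a = TT D (t0 - x)"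
    using nz by (simp add: TT_mult[OF der, symmetric] f_def a_def)
  have A: "eq_trunc n [: t0 - x, 1 :]
           ((\<Sum>k=0..n. monom ((D ^^ k) ((t0 - x) / (s - u 0 0)) / fact k) k)
            * ([: s :] - (\<Sum>k=0..n. monom (u k k) k)))" (is "eq_trunc n ?L (?P * ?Q)")
  proof -
    have cP: "coeff ?P i = TT D f $ i" if "i \<le> n" for i
      using that by (simp add: coeff_monom_sum TT_nth f_def a_def)
    have cQ: "coeff ?Q i = TT D a $ i" if "i \<le> n" for i
      using that by (simp add: coeff_monom_sum Ta[unfolded a_def] coeff_pCons' a_def)
    have "coeff (?P * ?Q) m = coeff ?L m" if "m \<le> n" for m
    proof -
      have "coeff (?P * ?Q) m = (\<Sum>i\<le>m. TT D f $ i * TT D a $ (m - i))"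
        unfolding coeff_mult
      proof (intro sum.cong refl)
        fix i assume "i \<in> {..m}"
        then have "i \<le> n" "m - i \<le> n" using that by auto
        then show "coeff ?P i * coeff ?Q (m - i) = TT D f $ i * TT D a $ (m - i)"
          by (simp only: cP cQ)
      qed
      also have "\<dots> = TT D (t0 - x) $ m" by (simp add: fa[symmetric] fps_mult_nth atLeast0AtMost)
      also have "\<dots> = coeff ?L m" by (simp add: Tt coeff_pCons')
      finally show ?thesis .
    qed
    then have "\<forall>k<Suc n. coeff (?L - ?P * ?Q) k = 0" by simp
    then show ?thesis unfolding eq_trunc_def monom_1_dvd_iff'[symmetric] by (simp add: monom_altdef)
  qed
  define h where "h = - u 1 1 / a"
  define L where "L = Abs_fps (\<lambda>m. if m = 0 then 0 else (D ^^ (m - 1)) h / fact m)"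
  define W where "W = Abs_fps (\<lambda>k. if k = 0 then 0 else u k k / a)"
  have anz: "a \<noteq> 0" using nz a_def by simp
  have Da: "D a = - u 1 1" using Du[of 0 0] by (simp add: a_def ddiff[OF der] Ds)
  have dL: "fps_deriv L = TT D h"
  proof -
    have "of_nat (Suc m) * ((D ^^ m) h / fact (Suc m)) = (D ^^ m) h / (fact m :: 'a)" for m
    proof -
      have c: "(of_nat (Suc m)::'a) \<noteq> 0" by (rule of_nat_neq_0)
      then show ?thesis by (simp add: field_simps del: of_nat_Suc)
    qed
    then show ?thesis by (simp add: fps_eq_iff L_def TT_nth del: of_nat_Suc)
  qed
  have TaW: "TT D a = fps_const a * (1 - W)"
    by (simp add: fps_eq_iff Ta W_def anz)
  have "TT D h * TT D a = fps_deriv (TT D a)"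
    using anz by (simp add: TT_mult[OF der, symmetric] TT_deriv[OF der] h_def Da)
  then have "fps_const a * ((1 - W) * fps_deriv L) = fps_const a * (- fps_deriv W)"
    unfolding TaW dL by (simp add: algebra_simps)
  moreover have "fps_const a \<noteq> 0" using anz by simp
  ultimately have eqL: "(1 - W) * fps_deriv L = - fps_deriv W"
    by (metis mult_cancel_left)
  define E where "E = fps_ln 1 oo (- W)"
  have W0: "W $ 0 = 0" by (simp add: W_def)
  have eqE: "(1 - W) * fps_deriv E = - fps_deriv W"
    using fpsln_comp[of "- W"] W0 by (simp add: E_def)
  have "(1 - W) * (fps_deriv E - fps_deriv L) = 0"
    by (simp only: right_diff_distrib eqE eqL) simp
  moreover have "1 - W \<noteq> 0"
  proof
    assume "1 - W = 0" then have "(1 - W) $ 0 = 0" by simp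
    then show False using W0 by simp
  qed
  ultimately have "fps_deriv E = fps_deriv L" by simp
  moreover have "E $ 0 = 0" by (simp add: E_def fps_compose_nth)
  moreover have "L $ 0 = 0" by (simp add: L_def)
  ultimately have EL: "E = L" by (simp add: fps_deriv_eq_iff)
  have B: "(D ^^ (m - 1)) (- u 1 1 / (s - u 0 0)) / fact m = log_coeff n s (\<lambda>k. u k k) m"
    if m: "1 \<le> m" "m \<le> n" for m
  proof -
    define w where "w = (\<Sum>k=1..n. monom (u k k / (s - u 0 0)) k)"
    have wW: "fps_of_poly w $ i = W $ i" if "i \<le> n" for i
      using that by (simp add: w_def coeff_monom_sum W_def a_def)
    have cw: "coeff (w ^ r) m = (W ^ r) $ m" for r
    proof -
      have "coeff (w ^ r) m = (fps_of_poly w ^ r) $ m"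
        by (simp only: fps_of_poly_power[symmetric] fps_of_poly_nth)
      also have "\<dots> = (W ^ r) $ m" by (rule pow_agree[where n=n]) (use wW m in auto)
      finally show ?thesis .
    qed
    have "log_coeff n s (\<lambda>k. u k k) m = - (\<Sum>r=1..n. (W ^ r) $ m / of_nat r)"
      unfolding log_coeff_def Let_def w_def[symmetric] by (simp only: cw)
    also have "(\<Sum>r=1..n. (W ^ r) $ m / of_nat r) = (\<Sum>r=1..m. (W ^ r) $ m / of_nat r)"
      by (rule sum.mono_neutral_right) (use m pow_low[OF W0] in auto)
    also have "- (\<Sum>r=1..m. (W ^ r) $ m / of_nat r) = (\<Sum>r=1..m. fps_ln 1 $ r * ((- W) ^ r $ m))"
      unfolding sum_negf[symmetric]
    proof (rule sum.cong)
      fix r assume r: "r \<in> {1..m}"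
      have "(-1::'a) ^ (r - 1) * (-1) ^ r = - 1"
      proof -
        have "(-1::'a) ^ (r - 1) * (-1) ^ r = (-1) ^ (r - 1 + r)" by (simp add: power_add)
        moreover have "odd (r - 1 + r)" using r by auto
        ultimately show ?thesis by (simp add: neg_one_odd_power)
      qed
      then have pm: "(-1::'a) ^ (r - 1) * (-1) ^ r = - 1" .
      have "fps_ln 1 $ r * ((- W) ^ r $ m) = ((-1) ^ (r - 1) / of_nat r) * ((-1) ^ r * (W ^ r $ m))"
        using r by (simp add: fps_ln_nth neg_pow_nth)
      also have "\<dots> = ((-1::'a) ^ (r - 1) * (-1) ^ r) * (W ^ r $ m) / of_nat r"
        by (simp add: field_simps)
      also have "\<dots> = - ((W ^ r) $ m / of_nat r)" by (simp only: pm) simp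
      finally show "- ((W ^ r) $ m / of_nat r) = fps_ln 1 $ r * ((- W) ^ r $ m)" by simp
    qed simp
    also have "\<dots> = E $ m"
      unfolding E_def fps_compose_nth
      by (simp add: sum.atLeast_Suc_atMost[of 0 m] atLeastSucAtMost_greaterThanAtMost[symmetric])
    also have "\<dots> = (D ^^ (m - 1)) (- u 1 1 / (s - u 0 0)) / fact m"
      using m by (simp add: EL L_def h_def a_def)
    finally show ?thesis by simp
  qed
  show ?thesis using A B by blast
qed

end
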